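(* Let $\theta \geq 2$ be an integer, $F = 4\theta - 1$, and $p_j = \binom{F}{j} 2^{-F}$ for $j = 0,\ldots,F$. Then $$\sum_{j \leq \theta} (-j)\, p_j + \sum_{\theta < j \leq F} \big(j + 2(1 - j/F - \theta)\big) p_j > 0.$$
   Context: This quantity is the expected value $E\phi(e)$ of the weight $\phi(e) = -\zeta_0(e)$ if $\zeta_0(e) \leq \theta$ and $\phi(e) = \zeta_0(e) + 2(X - \theta)$ otherwise, where $\zeta_0(e) \sim \mathrm{Binomial}(F,1/2)$ and, given $\zeta_0(e)$, $X$ is Bernoulli$(1 - \zeta_0(e)/F)$. *)

theory Defs
  imports Complex_Main
begin

end

theory Submission
  imports Defs
begin

lemma two_choose_lt:
  fixes n k :: nat
  assumes "0 < k" "2 * k < n"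
  shows "2 * (n choose k) < 2 ^ n"
proof -
  have kn: "k \<le> n" using assms by linarith
  have sub: "{0, k, n - k} \<subseteq> {..n}" using kn by auto
  have "(\<Sum>i\<in>{0, k, n - k}. n choose i) \<le> (\<Sum>i\<le>n. n choose i)"
    by (rule sum_mono2) (use kn in auto)
  also have "\<dots> = 2 ^ n" by (rule choose_row_sum)
  finally have "(\<Sum>i\<in>{0, k, n - k}. n choose i) \<le> 2 ^ n" .
  moreover have "(\<Sum>i\<in>{0, k, n - k}. n choose i) = 1 + (n choose k) + (n choose (n - k))"
    using assms by auto
  moreover have "n choose (n - k) = n choose k"
    using assms binomial_symmetric[of k n] by auto
  ultimately show ?thesis by linarith
qed

theorem lemma6:
  fixes \<theta> :: nat
  assumes "\<theta> \<ge> 2"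
  defines "F \<equiv> 4 * \<theta> - 1"
  defines "p \<equiv> (\<lambda>j::nat. real (F choose j) / 2 ^ F)"
  shows "(\<Sum>j\<in>{0..\<theta>}. (- real j) * p j)
         + (\<Sum>j\<in>{\<theta><..F}. (real j + 2 * (1 - real j / real F - real \<theta>)) * p j) > 0"
proof -
  define c where "c = (\<lambda>j. real (F choose j))"
  define g where "g = (\<lambda>j. (real j + 2 * (1 - real j / real F - real \<theta>)) * c j)"
  define h where "h = (\<lambda>j. (- real j) * c j - g j)"
  have F7: "F \<ge> 7" using assms(1) unfolding F_def by simp
  have rF: "real F = 4 * real \<theta> - 1" using assms(1) unfolding F_def by simp
  have split: "\<And>f :: nat \<Rightarrow> real. (\<Sum>j\<le>F. f j) = (\<Sum>j\<in>{0..\<theta>}. f j) + (\<Sum>j\<in>{\<theta><..F}. f j)"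
  proof -
    fix f :: "nat \<Rightarrow> real"
    have "{..F} = {0..\<theta>} \<union> {\<theta><..F}" using F7 assms(1) unfolding F_def by auto
    then show "(\<Sum>j\<le>F. f j) = (\<Sum>j\<in>{0..\<theta>}. f j) + (\<Sum>j\<in>{\<theta><..F}. f j)"
      by (simp add: sum.union_disjoint ivl_disj_int)
  qed
  have s0: "(\<Sum>j\<le>F. c j) = 2 ^ F"
    unfolding c_def using choose_row_sum[of F] by (metis of_nat_numeral of_nat_power of_nat_sum)
  have s1: "(\<Sum>j\<le>F. real j * c j) = real F * 2 ^ (F - 1)"
    unfolding c_def using choose_linear_sum[of F]
    by (metis (no_types, lifting) of_nat_mult of_nat_numeral of_nat_power of_nat_sum sum.cong)
  have pw: "(2::real) ^ F = 2 * 2 ^ (F - 1)" using F7 by (metis Suc_diff_1 less_le_trans power_Suc zero_less_numeral gr0I not_numeral_le_zero le_0_eq)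
  have rt: "real \<theta> = (real F + 1) / 4" using rF by simp
  have Fpos: "real F > 0" using F7 by simp
  have "(\<Sum>j\<le>F. g j) = (\<Sum>j\<le>F. real j * c j * (1 - 2 / real F) + (2 - 2 * real \<theta>) * c j)"
    unfolding g_def by (rule sum.cong) (auto simp: field_simps)
  also have "\<dots> = (1 - 2 / real F) * (\<Sum>j\<le>F. real j * c j) + (2 - 2 * real \<theta>) * (\<Sum>j\<le>F. c j)"
    by (simp add: sum.distrib sum_distrib_left sum_distrib_right mult.commute mult.left_commute)
  also have "\<dots> = 2 ^ (F - 1)"
    unfolding s0 s1 pw
  proof -
    define x :: real where "x = 2 ^ (F - 1)"
    have a: "(1 - 2 / real F) * (real F * x) = real F * x - 2 * x" using Fpos by (simp add: field_simps)
    have b: "(2 - 2 * real \<theta>) * (2 * x) = 4 * x - (4 * real \<theta>) * x" by (simp add: algebra_simps)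
    have c: "(4 * real \<theta>) * x = (real F + 1) * x" using rF by simp
    show "(1 - 2 / real F) * (real F * 2 ^ (F - 1)) + (2 - 2 * real \<theta>) * (2 * 2 ^ (F - 1)) = 2 ^ (F - 1)"
      unfolding x_def[symmetric] a b c by (simp add: algebra_simps)
  qed
  finally have sg: "(\<Sum>j\<le>F. g j) = 2 ^ (F - 1)" .
  have lhs: "(\<Sum>j\<in>{0..\<theta>}. (- real j) * p j)
         + (\<Sum>j\<in>{\<theta><..F}. (real j + 2 * (1 - real j / real F - real \<theta>)) * p j)
         = ((\<Sum>j\<in>{0..\<theta>}. (- real j) * c j) + (\<Sum>j\<in>{\<theta><..F}. g j)) / 2 ^ F"
    unfolding p_def g_def c_def by (simp add: sum_divide_distrib add_divide_distrib)
  have "(\<Sum>j\<in>{\<theta><..F}. g j) = 2 ^ (F - 1) - (\<Sum>j\<in>{0..\<theta>}. g j)"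
    using split[of g] sg by linarith
  hence num: "(\<Sum>j\<in>{0..\<theta>}. (- real j) * c j) + (\<Sum>j\<in>{\<theta><..F}. g j)
      = 2 ^ (F - 1) + (\<Sum>j\<in>{0..\<theta>}. h j)"
    unfolding h_def by (simp add: sum_subtractf)
  have hnn: "\<And>j. j < \<theta> \<Longrightarrow> h j \<ge> 0"
  proof -
    fix j assume "j < \<theta>"
    hence "real j + 1 \<le> real \<theta>" by simp
    moreover have "real j / real F \<ge> 0" by simp
    ultimately have "- real j - (real j + 2 * (1 - real j / real F - real \<theta>)) \<ge> 0" by smt
    moreover have "c j \<ge> 0" unfolding c_def by simp
    ultimately show "h j \<ge> 0" unfolding h_def g_def
      by (metis left_diff_distrib mult_nonneg_nonneg mult_minus_left)
  qed
  have "{0..\<theta>} = insert \<theta> {0..<\<theta>}" by auto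
  hence "(\<Sum>j\<in>{0..\<theta>}. h j) = h \<theta> + (\<Sum>j\<in>{0..<\<theta>}. h j)" by simp
  moreover have "(\<Sum>j\<in>{0..<\<theta>}. h j) \<ge> 0" by (rule sum_nonneg) (simp add: hnn)
  ultimately have hs: "(\<Sum>j\<in>{0..\<theta>}. h j) \<ge> h \<theta>" by linarith
  have hth: "h \<theta> = - 2 * (real (F - \<theta>) / real F) * c \<theta>"
    unfolding h_def g_def using Fpos F7 assms(1) unfolding F_def
    by (simp add: field_simps of_nat_diff)
  have absorb: "real (F - \<theta>) * c \<theta> = real F * real ((F - 1) choose \<theta>)"
    unfolding c_def using binomial_absorb_comp[of F \<theta>] by (metis of_nat_mult)
  have "h \<theta> = - 2 * real ((F - 1) choose \<theta>)"
    unfolding hth using absorb Fpos by (simp add: field_simps)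
  moreover have "2 * ((F - 1) choose \<theta>) < 2 ^ (F - 1)"
    by (rule two_choose_lt) (use assms(1) in \<open>auto simp: F_def\<close>)
  hence "2 * real ((F - 1) choose \<theta>) < 2 ^ (F - 1)"
    by (metis of_nat_less_iff of_nat_mult of_nat_numeral of_nat_power)
  ultimately have "2 ^ (F - 1) + (\<Sum>j\<in>{0..\<theta>}. h j) > 0" using hs by linarith
  thus ?thesis unfolding lhs num by simp
qed

end
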